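(* Assume $f$ satisfies (A1). Let $x_0\in X$, $\hat y\in Y$, and run Algorithm 1 with step size $\gamma_x=1/\lambda$ and a number of iterations $$T\ge\frac{300\lambda[\varphi(x_0)-\psi(\hat y)]}{\varepsilon^2},$$ where $\psi(y)=\min_{x\in X}f(x,y)$. Then its output $x^*$ satisfies $\|\nabla\hat\varphi_{2\lambda}(x^* )\|\le\varepsilon/6$, where $\hat\varphi(x)=f(x,\hat y)$. Moreover, $\|\nabla\varphi_{2\lambda}(x^* )\|\le\varepsilon$ provided $24\mu\mathsf D\le\varepsilon$.
   Context: Let $E_x,E_y$ be finite-dimensional Euclidean spaces with Euclidean norms $\|\cdot\|$. Let $X\subseteq E_x$, $Y\subseteq E_y$ be convex sets with nonempty interior, $Y$ compact, and $\mathsf D\ge\mathrm{diam}(Y)$. Let $f:X\times Y\to\mathbb R$ and $\varphi(x)=\max_{y\in Y}f(x,y)$. (A1): $\nabla_x f$ exists on $X\times Y$ and $\|\nabla_x f(x',y')-\nabla_x f(x,y)\|\le\lambda\|x'-x\|+\mu\|y'-y\|$ for all $x,x'\in X,y,y'\in Y$, with $\lambda>0,\mu\ge0$. For a $\lambda'$-weakly convex function $\phi:X\to\mathbb R$ (i.e. $\phi+\frac{\lambda'}2\|\cdot\|^2$ convex) and $\bar\lambda>\lambda'$, the Moreau envelope is $\phi_{\bar\lambda}(x)=\min_{u\in X}\{\phi(u)+\frac{\bar\lambda}{2}\|u-x\|^2\}$; $\Pi_X$ denotes Euclidean projection onto $X$. Algorithm 1 (input $x_0\in X$, $\hat y\in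 Y$, $\gamma_x>0$, $T\in\mathbb N$): set $x^*=x_0$, $\varepsilon^*=+\infty$. For $t=0,\dots,T-1$: set $\tilde x_{t+1}=x_t-\gamma_x\nabla_x f(x_t,\hat y)$, $x_{t+1}=\Pi_X[\tilde x_{t+1}]$, $\varepsilon_t^2=\|\nabla_x f(x_t,\hat y)\|^2-\frac1{\gamma_x^2}\|\tilde x_{t+1}-x_{t+1}\|^2$; if $\varepsilon_t<\varepsilon^*$, set $x^*=x_t$, $\varepsilon^*=\varepsilon_t$. Output $x^*$. *)

theory Defs
  imports "HOL-Analysis.Analysis"
begin

definition moreau_env :: "('a::real_normed_vector \<Rightarrow> real) \<Rightarrow> 'a set \<Rightarrow> real \<Rightarrow> 'a \<Rightarrow> real" where
  "moreau_env phi X lam x = (INF u\<in>X. phi u + lam / 2 * (norm (u - x))\<^sup>2)"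

text \<open>Algorithm 1. gx x y is the partial gradient of f in x; proj = Euclidean projection onto X.\<close>
fun alg1_x :: "('a::euclidean_space \<Rightarrow> 'b \<Rightarrow> 'a) \<Rightarrow> 'a set \<Rightarrow> real \<Rightarrow> 'a \<Rightarrow> 'b \<Rightarrow> nat \<Rightarrow> 'a" where
  "alg1_x gx X gam x0 yh 0 = x0"
| "alg1_x gx X gam x0 yh (Suc t) =
     closest_point X (alg1_x gx X gam x0 yh t - gam *\<^sub>R gx (alg1_x gx X gam x0 yh t) yh)"

definition alg1_xt :: "('a::euclidean_space \<Rightarrow> 'b \<Rightarrow> 'a) \<Rightarrow> 'a set \<Rightarrow> real \<Rightarrow> 'a \<Rightarrow> 'b \<Rightarrow> nat \<Rightarrow> 'a" where
  "alg1_xt gx X gam x0 yh t = alg1_x gx X gam x0 yh t - gam *\<^sub>R gx (alg1_x gx X gam x0 yh t) yh"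

definition alg1_eps_sq :: "('a::euclidean_space \<Rightarrow> 'b \<Rightarrow> 'a) \<Rightarrow> 'a set \<Rightarrow> real \<Rightarrow> 'a \<Rightarrow> 'b \<Rightarrow> nat \<Rightarrow> real" where
  "alg1_eps_sq gx X gam x0 yh t =
     (norm (gx (alg1_x gx X gam x0 yh t) yh))\<^sup>2
     - (1 / gam\<^sup>2) * (norm (alg1_xt gx X gam x0 yh t - alg1_x gx X gam x0 yh (Suc t)))\<^sup>2"

text \<open>State (x*, eps*) after the loop body has been executed for t = 0, ..., n-1.\<close>
fun alg1_state :: "('a::euclidean_space \<Rightarrow> 'b \<Rightarrow> 'a) \<Rightarrow> 'a set \<Rightarrow> real \<Rightarrow> 'a \<Rightarrow> 'b \<Rightarrow> nat \<Rightarrow> 'a \<times> ereal" where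
  "alg1_state gx X gam x0 yh 0 = (x0, \<infinity>)"
| "alg1_state gx X gam x0 yh (Suc t) =
     (let (xs, es) = alg1_state gx X gam x0 yh t;
          e = sqrt (alg1_eps_sq gx X gam x0 yh t)
      in if ereal e < es then (alg1_x gx X gam x0 yh t, ereal e) else (xs, es))"

definition alg1_output :: "('a::euclidean_space \<Rightarrow> 'b \<Rightarrow> 'a) \<Rightarrow> 'a set \<Rightarrow> real \<Rightarrow> 'a \<Rightarrow> 'b \<Rightarrow> nat \<Rightarrow> 'a" where
  "alg1_output gx X gam x0 yh T = fst (alg1_state gx X gam x0 yh T)"

end

theory Submission
  imports Defs
begin

lemma seg_deriv:
  fixes G :: "'a::euclidean_space \<Rightarrow> real" and dG :: "'a \<Rightarrow> 'a"
  assumes X: "convex X" and x: "x \<in> X" and u: "u \<in> X"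
    and der: "\<And>z. z \<in> X \<Longrightarrow> (G has_derivative (\<lambda>h. dG z \<bullet> h)) (at z within X)"
    and t: "t \<in> {0..1}"
  shows "((\<lambda>t. G (x + t *\<^sub>R (u - x))) has_derivative (\<lambda>s. (dG (x + t *\<^sub>R (u - x)) \<bullet> (u - x)) * s)) (at t within {0..1})"
proof -
  have sub: "(\<lambda>t. x + t *\<^sub>R (u - x)) ` {0..1} \<subseteq> X"
  proof
    fix z assume "z \<in> (\<lambda>t. x + t *\<^sub>R (u - x)) ` {0..1}"
    then obtain s where s: "s \<in> {0..1}" "z = x + s *\<^sub>R (u - x)" by auto
    have "z = (1 - s) *\<^sub>R x + s *\<^sub>R u" using s by (simp add: algebra_simps)
    then show "z \<in> X" using X x u s by (auto intro: convexD_alt)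
  qed
  have d1: "((\<lambda>t. x + t *\<^sub>R (u - x)) has_derivative (\<lambda>s. s *\<^sub>R (u - x))) (at t within {0..1})"
    by (auto intro!: derivative_eq_intros)
  have "((\<lambda>t. G (x + t *\<^sub>R (u - x))) has_derivative (\<lambda>s. dG (x + t *\<^sub>R (u - x)) \<bullet> (s *\<^sub>R (u - x)))) (at t within {0..1})"
    by (rule has_derivative_in_compose2[OF der sub t d1]) auto
  then show ?thesis by (simp add: mult.commute)
qed

lemma quad_bound:
  fixes G :: "'a::euclidean_space \<Rightarrow> real" and dG :: "'a \<Rightarrow> 'a"
  assumes X: "convex X" and x: "x \<in> X" and u: "u \<in> X"
    and der: "\<And>z. z \<in> X \<Longrightarrow> (G has_derivative (\<lambda>h. dG z \<bullet> h)) (at z within X)"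
    and lip: "\<And>a b. a \<in> X \<Longrightarrow> b \<in> X \<Longrightarrow> norm (dG b - dG a) \<le> lam * norm (b - a)"
  shows "G u \<le> G x + dG x \<bullet> (u - x) + lam / 2 * (norm (u - x))\<^sup>2"
    and "G u \<ge> G x + dG x \<bullet> (u - x) - lam / 2 * (norm (u - x))\<^sup>2"
proof -
  define p where "p t = x + t *\<^sub>R (u - x)" for t
  have pin: "p t \<in> X" if "t \<in> {0..1}" for t
  proof -
    have "p t = (1 - t) *\<^sub>R x + t *\<^sub>R u" by (simp add: p_def algebra_simps)
    then show ?thesis using X x u that by (auto intro: convexD_alt)
  qed
  have key: "\<bar>(dG (p t) - dG x) \<bullet> (u - x)\<bar> \<le> lam * t * (norm (u - x))\<^sup>2" if t: "t \<in> {0..1}" for t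
  proof -
    have "\<bar>(dG (p t) - dG x) \<bullet> (u - x)\<bar> \<le> norm (dG (p t) - dG x) * norm (u - x)"
      by (rule Cauchy_Schwarz_ineq2)
    also have "\<dots> \<le> lam * norm (p t - x) * norm (u - x)"
      by (rule mult_right_mono[OF lip[OF x pin[OF t]]]) auto
    also have "norm (p t - x) = t * norm (u - x)" using t by (simp add: p_def)
    finally show ?thesis by (simp add: power2_eq_square mult.assoc)
  qed
  define c where "c = dG x \<bullet> (u - x)"
  define r where "r = (norm (u - x))\<^sup>2"
  have dp: "((\<lambda>t. G (p t)) has_derivative (\<lambda>s. (dG (p t) \<bullet> (u - x)) * s)) (at t within {0..1})"
    if "t \<in> {0..1}" for t
    unfolding p_def by (rule seg_deriv[OF X x u der that])
  have d1: "((\<lambda>t. G (p t) - t * c - lam / 2 * t\<^sup>2 * r) has_derivative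
      (\<lambda>s. (dG (p t) \<bullet> (u - x) - c - lam * t * r) * s)) (at t within {0..1})"
    if "t \<in> {0..1}" for t
    using dp[OF that] by (auto intro!: derivative_eq_intros simp: algebra_simps)
  obtain t1 where t1: "t1 \<in> {0..1}" and e1:
    "(G (p 1) - 1 * c - lam / 2 * 1\<^sup>2 * r) - (G (p 0) - 0 * c - lam / 2 * 0\<^sup>2 * r)
      = (dG (p t1) \<bullet> (u - x) - c - lam * t1 * r) * (1 - 0)"
    using mvt_very_simple[of 0 1 "\<lambda>t. G (p t) - t * c - lam / 2 * t\<^sup>2 * r", OF _ d1] by auto
  have d2: "((\<lambda>t. G (p t) - t * c + lam / 2 * t\<^sup>2 * r) has_derivative
      (\<lambda>s. (dG (p t) \<bullet> (u - x) - c + lam * t * r) * s)) (at t within {0..1})"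
    if "t \<in> {0..1}" for t
    using dp[OF that] by (auto intro!: derivative_eq_intros simp: algebra_simps)
  obtain t2 where t2: "t2 \<in> {0..1}" and e2:
    "(G (p 1) - 1 * c + lam / 2 * 1\<^sup>2 * r) - (G (p 0) - 0 * c + lam / 2 * 0\<^sup>2 * r)
      = (dG (p t2) \<bullet> (u - x) - c + lam * t2 * r) * (1 - 0)"
    using mvt_very_simple[of 0 1 "\<lambda>t. G (p t) - t * c + lam / 2 * t\<^sup>2 * r", OF _ d2] by auto
  have p0: "p 0 = x" and p1: "p 1 = u" by (auto simp: p_def)
  have k1: "dG (p t1) \<bullet> (u - x) - c \<le> lam * t1 * r" using key[OF t1] by (simp add: c_def r_def inner_diff_left)
  have k2: "dG (p t2) \<bullet> (u - x) - c \<ge> - lam * t2 * r" using key[OF t2] by (simp add: c_def r_def inner_diff_left)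
  show "G u \<le> G x + dG x \<bullet> (u - x) + lam / 2 * (norm (u - x))\<^sup>2"
    using e1 k1 p0 p1 by (simp add: c_def r_def)
  show "G u \<ge> G x + dG x \<bullet> (u - x) - lam / 2 * (norm (u - x))\<^sup>2"
    using e2 k2 p0 p1 by (simp add: c_def r_def)
qed

lemma comb_norm_identity:
  fixes a b x :: "'a::real_inner"
  shows "(norm ((1 - s) *\<^sub>R a + s *\<^sub>R b - x))\<^sup>2
    = (1 - s) * (norm (a - x))\<^sup>2 + s * (norm (b - x))\<^sup>2 - s * (1 - s) * (norm (a - b))\<^sup>2"
proof -
  have e: "(1 - s) *\<^sub>R a + s *\<^sub>R b - x = (1 - s) *\<^sub>R (a - x) + s *\<^sub>R (b - x)"
    by (simp add: algebra_simps)
  have e2: "a - b = (a - x) - (b - x)" by simp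
  define a' where "a' = a - x"
  define b' where "b' = b - x"
  show ?thesis unfolding e e2 a'_def[symmetric] b'_def[symmetric] power2_norm_eq_inner
    by (simp add: inner_simps inner_commute algebra_simps)
qed

lemma growth:
  fixes F :: "'a::real_inner \<Rightarrow> real"
  assumes X: "convex X"
    and wc: "\<And>a b s. a \<in> X \<Longrightarrow> b \<in> X \<Longrightarrow> 0 \<le> s \<Longrightarrow> s \<le> 1 \<Longrightarrow>
        F ((1 - s) *\<^sub>R a + s *\<^sub>R b) \<le> (1 - s) * F a + s * F b + lam / 2 * s * (1 - s) * (norm (a - b))\<^sup>2"
    and lam: "lam > 0"
    and q: "q \<in> X" and qmin: "\<And>u. u \<in> X \<Longrightarrow> F q + lam * (norm (q - x))\<^sup>2 \<le> F u + lam * (norm (u - x))\<^sup>2"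
    and u: "u \<in> X"
  shows "F u + lam * (norm (u - x))\<^sup>2 \<ge> F q + lam * (norm (q - x))\<^sup>2 + lam / 2 * (norm (u - q))\<^sup>2"
proof -
  define H where "H v = F v + lam * (norm (v - x))\<^sup>2" for v
  define A where "A = (norm (u - q))\<^sup>2"
  have step: "H u - H q \<ge> lam / 2 * (1 - s) * A" if s: "0 < s" "s \<le> 1" for s
  proof -
    define z where "z = (1 - s) *\<^sub>R q + s *\<^sub>R u"
    have zX: "z \<in> X" using X q u s unfolding z_def by (auto intro: convexD_alt)
    have "H q \<le> H z" using qmin[OF zX] by (simp add: H_def)
    also have "H z \<le> (1 - s) * H q + s * H u - lam / 2 * s * (1 - s) * A"
    proof -
      have "F z \<le> (1 - s) * F q + s * F u + lam / 2 * s * (1 - s) * A"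
        using wc[OF q u, of s] s unfolding z_def A_def by (simp add: norm_minus_commute)
      moreover have zeq: "(norm (z - x))\<^sup>2 = (1 - s) * (norm (q - x))\<^sup>2 + s * (norm (u - x))\<^sup>2 - s * (1 - s) * A"
        unfolding z_def A_def using comb_norm_identity[of s q u x] by (simp add: norm_minus_commute)
      ultimately show ?thesis unfolding H_def zeq by (simp add: field_simps)
    qed
    finally have "s * (H u - H q) \<ge> s * (lam / 2 * (1 - s) * A)" by (simp add: algebra_simps)
    then show ?thesis using s by simp
  qed
  have A0: "A \<ge> 0" by (simp add: A_def)
  have "H u - H q \<ge> lam / 2 * A"
  proof (rule ccontr)
    assume c: "\<not> ?thesis"
    have hq: "H u - H q \<ge> 0" using qmin[OF u] by (simp add: H_def)
    then have Ap: "A > 0" using c A0 lam by (cases "A = 0") auto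
    define s where "s = (lam / 2 * A - (H u - H q)) / (lam * A)"
    have s0: "s > 0" using c Ap lam by (simp add: s_def)
    have lA: "lam * A > 0" using Ap lam by simp
    have "lam / 2 * A - (H u - H q) \<le> 1 * (lam * A)" using hq lA by linarith
    then have s1: "s \<le> 1" unfolding s_def using pos_divide_le_eq[OF lA] by blast
    have "lam / 2 * (1 - s) * A = lam / 2 * A - (lam / 2 * A - (H u - H q)) / 2"
      using Ap lam by (simp add: s_def field_simps)
    then have "lam / 2 * (1 - s) * A > H u - H q" using c by argo
    then show False using step[OF s0 s1] by simp
  qed
  then show ?thesis by (simp add: H_def A_def)
qed

lemma exists_prox:
  fixes F :: "'a::euclidean_space \<Rightarrow> real"
  assumes X: "closed X" and x0: "x0 \<in> X" and cont: "continuous_on X F"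
    and low: "\<And>u. u \<in> X \<Longrightarrow> F u \<ge> c - K * norm (u - x0) - lam / 2 * (norm (u - x0))\<^sup>2"
    and lam: "lam > 0" and K: "K \<ge> 0"
  shows "\<exists>q\<in>X. \<forall>u\<in>X. F q + lam * (norm (q - x)) \<^sup>2 \<le> F u + lam * (norm (u - x))\<^sup>2"
proof -
  define H where "H v = F v + lam * (norm (v - x))\<^sup>2" for v
  define d where "d = norm (x - x0)"
  define K' where "K' = K + 2 * lam * d"
  define B where "B = H x0 - c"
  have d0: "d \<ge> 0" by (simp add: d_def)
  have K'0: "K' \<ge> 0" using K lam d0 by (simp add: K'_def)
  have B0: "B \<ge> 0" using low[OF x0] lam by (simp add: B_def H_def add_nonneg_nonneg add_increasing2)
  define R where "R = 2 * K' / lam + 1 + 2 * B / lam"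
  have far: "H u > H x0" if u: "u \<in> X" and uR: "norm (u - x0) > R" for u
  proof -
    define r where "r = norm (u - x0)"
    have r0: "r \<ge> 0" by (simp add: r_def)
    have sq: "(norm (u - x))\<^sup>2 \<ge> r\<^sup>2 - 2 * r * d"
    proof -
      have tri: "norm (u - x) \<ge> r - d" unfolding r_def d_def
        using norm_triangle_ineq2[of "u - x0" "x - x0"] by (simp add: norm_minus_commute)
      show ?thesis
      proof (cases "r \<ge> d")
        case True
        then have "(r - d)\<^sup>2 \<le> (norm (u - x))\<^sup>2" using tri by (intro power_mono) auto
        moreover have "(r - d)\<^sup>2 = r\<^sup>2 - 2 * r * d + d\<^sup>2" by (simp add: power2_diff)
        moreover have "0 \<le> d\<^sup>2" by simp
        ultimately show ?thesis by linarith
      next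
        case False
        then have "r * r \<le> d * r" using r0 by (intro mult_right_mono) auto
        moreover have "0 \<le> d * r" using r0 d0 by simp
        ultimately have "r\<^sup>2 - 2 * r * d \<le> 0" by (simp add: power2_eq_square algebra_simps)
        then show ?thesis by (smt (verit) zero_le_power2)
      qed
    qed
    have "H u \<ge> c - K * r - lam / 2 * r\<^sup>2 + lam * (r\<^sup>2 - 2 * r * d)"
    proof -
      have "lam * (r\<^sup>2 - 2 * r * d) \<le> lam * (norm (u - x))\<^sup>2"
        using sq lam by (intro mult_left_mono) auto
      then show ?thesis using low[OF u] unfolding H_def r_def by linarith
    qed
    also have "c - K * r - lam / 2 * r\<^sup>2 + lam * (r\<^sup>2 - 2 * r * d) = c + lam / 2 * r * (r - 2 * K' / lam)"
      using lam by (simp add: K'_def field_simps power2_eq_square)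
    finally have Hu: "H u \<ge> c + lam / 2 * r * (r - 2 * K' / lam)" .
    have "K' / lam \<ge> 0" "B / lam \<ge> 0" using K'0 B0 lam by auto
    then have r1: "r > 1" using uR unfolding R_def r_def by simp
    have r2: "r - 2 * K' / lam > 2 * B / lam" using uR unfolding R_def r_def by simp
    have "lam / 2 * r * (r - 2 * K' / lam) > lam / 2 * 1 * (2 * B / lam)"
    proof -
      have "2 * B / lam \<ge> 0" using B0 lam by simp
      then have "r * (r - 2 * K' / lam) > 1 * (2 * B / lam)"
        using mult_strict_mono[OF r1 r2] r1 by simp
      then have "lam / 2 * (1 * (2 * B / lam)) < lam / 2 * (r * (r - 2 * K' / lam))"
        by (rule mult_strict_left_mono) (use lam in simp)
      then show ?thesis by (simp add: mult.assoc)
    qed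
    moreover have "lam / 2 * 1 * (2 * B / lam) = B" using lam by simp
    ultimately have "lam / 2 * r * (r - 2 * K' / lam) > B" by simp
    then show ?thesis using Hu unfolding B_def by linarith
  qed
  define S where "S = X \<inter> cball x0 R"
  have cS: "compact S" unfolding S_def using X by (intro closed_Int_compact) auto
  have nS: "S \<noteq> {}" using x0 unfolding S_def
    using K'0 B0 lam by (auto simp: R_def) 
  have cH: "continuous_on S H" unfolding H_def S_def
    by (intro continuous_intros continuous_on_subset[OF cont]) auto
  obtain q where q: "q \<in> S" and qm: "\<And>v. v \<in> S \<Longrightarrow> H q \<le> H v"
    using continuous_attains_inf[OF cS nS cH] by blast
  have x0S: "x0 \<in> S" using nS x0 K'0 B0 lam by (auto simp: S_def R_def)
  have "H q \<le> H u" if u: "u \<in> X" for u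
  proof (cases "norm (u - x0) \<le> R")
    case True
    then have "u \<in> S" using u by (simp add: S_def dist_norm norm_minus_commute)
    then show ?thesis by (rule qm)
  next
    case False
    then have "H u > H x0" using far[OF u] by simp
    moreover have "H q \<le> H x0" by (rule qm[OF x0S])
    ultimately show ?thesis by simp
  qed
  then show ?thesis using q unfolding S_def H_def by auto
qed

lemma env_val:
  fixes F :: "'a::real_normed_vector \<Rightarrow> real"
  assumes q: "q \<in> X" and qm: "\<And>u. u \<in> X \<Longrightarrow> F q + lam * (norm (q - y))\<^sup>2 \<le> F u + lam * (norm (u - y))\<^sup>2"
  shows "moreau_env F X (2 * lam) y = F q + lam * (norm (q - y))\<^sup>2"
  unfolding moreau_env_def
  by (rule cInf_eq_minimum) (use q qm in auto)

lemma env_gderiv: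
  fixes F :: "'a::euclidean_space \<Rightarrow> real"
  assumes Q: "\<And>y. Q y \<in> X"
    and Qmin: "\<And>y u. u \<in> X \<Longrightarrow> F (Q y) + lam * (norm (Q y - y))\<^sup>2 \<le> F u + lam * (norm (u - y))\<^sup>2"
    and gr: "\<And>y u. u \<in> X \<Longrightarrow> F u + lam * (norm (u - y))\<^sup>2 \<ge> F (Q y) + lam * (norm (Q y - y))\<^sup>2 + lam / 2 * (norm (u - Q y))\<^sup>2"
    and lam: "lam > 0"
  shows "GDERIV (moreau_env F X (2 * lam)) x :> (2 * lam) *\<^sub>R (x - Q x)"
proof -
  define M where "M = moreau_env F X (2 * lam)"
  have Mv: "M y = F (Q y) + lam * (norm (Q y - y))\<^sup>2" for y
    unfolding M_def by (rule env_val[OF Q Qmin])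
  have rem: "\<bar>M y - M x - (y - x) \<bullet> ((2 * lam) *\<^sub>R (x - Q x))\<bar> \<le> 4 * lam * (norm (y - x))\<^sup>2" for y
  proof -
    define h where "h = y - x"
    define a where "a = Q x - x"
    define b where "b = Q y - x"
    have yq: "Q x - y = a - h" "Q y - y = b - h" "Q y - Q x = b - a"
      by (auto simp: a_def b_def h_def)
    have e1: "(norm (a - h))\<^sup>2 = (norm a)\<^sup>2 - 2 * (a \<bullet> h) + (norm h)\<^sup>2"
      using dot_norm_neg[of a h] by simp
    have e2: "(norm (b - h))\<^sup>2 = (norm b)\<^sup>2 - 2 * (b \<bullet> h) + (norm h)\<^sup>2"
      using dot_norm_neg[of b h] by simp
    have g1: "F (Q y) + lam * (norm b)\<^sup>2 \<ge> F (Q x) + lam * (norm a)\<^sup>2 + lam / 2 * (norm (b - a))\<^sup>2"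
      using gr[OF Q[of y], of x] unfolding a_def[symmetric] b_def[symmetric] yq(3) .
    have g2: "F (Q x) + lam * (norm (a - h))\<^sup>2 \<ge> F (Q y) + lam * (norm (b - h))\<^sup>2 + lam / 2 * (norm (b - a))\<^sup>2"
    proof -
      have n: "norm (Q x - Q y) = norm (b - a)" using yq(3) by (metis norm_minus_commute)
      show ?thesis using gr[OF Q[of x], of y] unfolding yq(1) yq(2) n .
    qed
    have cs: "(b - a) \<bullet> h \<le> norm (b - a) * norm h" by (rule norm_cauchy_schwarz)
    have bah: "(b - a) \<bullet> h = b \<bullet> h - a \<bullet> h" by (simp add: inner_diff_left)
    have le1: "lam * (norm (a - h))\<^sup>2 = lam * (norm a)\<^sup>2 - 2 * lam * (a \<bullet> h) + lam * (norm h)\<^sup>2"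
      unfolding e1 by (simp add: algebra_simps)
    have le2: "lam * (norm (b - h))\<^sup>2 = lam * (norm b)\<^sup>2 - 2 * lam * (b \<bullet> h) + lam * (norm h)\<^sup>2"
      unfolding e2 by (simp add: algebra_simps)
    have lbah: "2 * lam * ((b - a) \<bullet> h) = 2 * lam * (b \<bullet> h) - 2 * lam * (a \<bullet> h)"
      unfolding bah by (simp add: algebra_simps)
    have "lam * (norm (b - a))\<^sup>2 \<le> 2 * lam * ((b - a) \<bullet> h)"
      using g1 g2 le1 le2 lbah by linarith
    then have "lam * (norm (b - a))\<^sup>2 \<le> lam * (2 * ((b - a) \<bullet> h))" by (simp add: mult.assoc mult.left_commute)
    then have "(norm (b - a))\<^sup>2 \<le> 2 * ((b - a) \<bullet> h)" using lam by (simp only: mult_le_cancel_left_pos)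
    also have "\<dots> \<le> 2 * (norm (b - a) * norm h)" using cs by simp
    finally have "norm (b - a) * norm (b - a) \<le> (2 * norm h) * norm (b - a)"
      by (simp add: power2_eq_square mult.commute mult.left_commute)
    then have nba: "norm (b - a) \<le> 2 * norm h"
    proof (cases "norm (b - a) = 0")
      case True then show ?thesis by simp
    next
      case False then have "norm (b - a) > 0" by simp
      then show ?thesis using \<open>norm (b - a) * norm (b - a) \<le> (2 * norm h) * norm (b - a)\<close>
        by (simp only: mult_le_cancel_right_pos)
    qed
    have Mx: "M x = F (Q x) + lam * (norm a)\<^sup>2" using Mv[of x] by (simp add: a_def)
    have My: "M y = F (Q y) + lam * (norm (b - h))\<^sup>2" using Mv[of y] yq by simp
    have up: "M y \<le> F (Q x) + lam * (norm (a - h))\<^sup>2"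
      using Qmin[OF Q, of y x] yq My by simp
    have lo: "M x \<le> F (Q y) + lam * (norm b)\<^sup>2"
      using Qmin[OF Q, of x y] Mx by (simp add: b_def a_def)
    have lin: "(y - x) \<bullet> ((2 * lam) *\<^sub>R (x - Q x)) = - 2 * lam * (a \<bullet> h)"
    proof -
      have "x - Q x = - a" by (simp add: a_def)
      then have "(y - x) \<bullet> ((2 * lam) *\<^sub>R (x - Q x)) = - 2 * lam * (h \<bullet> a)"
        by (simp add: h_def)
      then show ?thesis by (simp add: inner_commute[of h a])
    qed
    have r1: "M y - M x + 2 * lam * (a \<bullet> h) \<le> lam * (norm h)\<^sup>2"
      using up Mx le1 by linarith
    have r2: "M y - M x + 2 * lam * (a \<bullet> h) \<ge> - (2 * lam * ((b - a) \<bullet> h)) + lam * (norm h)\<^sup>2"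
      using lo My le2 lbah by linarith
    have "2 * lam * ((b - a) \<bullet> h) \<le> 2 * lam * (norm (b - a) * norm h)"
      using cs lam by simp
    also have "\<dots> \<le> 2 * lam * (2 * norm h * norm h)"
      using nba lam by (intro mult_left_mono mult_right_mono) auto
    finally have r3: "2 * lam * ((b - a) \<bullet> h) \<le> 4 * lam * (norm h)\<^sup>2"
      by (simp add: power2_eq_square)
    have hn: "0 \<le> lam * (norm h)\<^sup>2" using lam by simp
    have "\<bar>M y - M x + 2 * lam * (a \<bullet> h)\<bar> \<le> 4 * lam * (norm h)\<^sup>2"
      using r1 r2 r3 hn by linarith
    moreover have "M y - M x - (y - x) \<bullet> ((2 * lam) *\<^sub>R (x - Q x)) = M y - M x + 2 * lam * (a \<bullet> h)" using lin by simp
    ultimately show ?thesis by (simp add: h_def)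
  qed
  show ?thesis
    unfolding M_def[symmetric] gderiv_def has_derivative_at_alt
  proof (intro conjI allI impI)
    show "bounded_linear (\<lambda>h. h \<bullet> ((2 * lam) *\<^sub>R (x - Q x)))"
      by (rule bounded_linear_inner_left)
    fix e :: real assume e: "e > 0"
    show "\<exists>d>0. \<forall>y. norm (y - x) < d \<longrightarrow>
      norm (M y - M x - (y - x) \<bullet> ((2 * lam) *\<^sub>R (x - Q x))) \<le> e * norm (y - x)"
    proof (intro exI[of _ "e / (4 * lam)"] conjI allI impI)
      show "e / (4 * lam) > 0" using e lam by simp
      fix y assume y: "norm (y - x) < e / (4 * lam)"
      have "4 * lam * norm (y - x) \<le> e" using y lam by (simp add: field_simps)
      then have "4 * lam * (norm (y - x))\<^sup>2 \<le> e * norm (y - x)"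
        by (simp add: power2_eq_square mult.assoc[symmetric] mult_right_mono)
      then show "norm (M y - M x - (y - x) \<bullet> ((2 * lam) *\<^sub>R (x - Q x))) \<le> e * norm (y - x)"
        using rem[of y] by simp
    qed
  qed
qed

lemma mvt_seg:
  fixes G :: "'a::euclidean_space \<Rightarrow> real" and dG :: "'a \<Rightarrow> 'a"
  assumes X: "convex X" and v: "v \<in> X" and u: "u \<in> X"
    and der: "\<And>z. z \<in> X \<Longrightarrow> (G has_derivative (\<lambda>h. dG z \<bullet> h)) (at z within X)"
  shows "\<exists>z\<in>X. G u - G v = dG z \<bullet> (u - v)"
proof -
  obtain t where t: "t \<in> {0..1}" and e:
    "G (v + 1 *\<^sub>R (u - v)) - G (v + 0 *\<^sub>R (u - v)) = (dG (v + t *\<^sub>R (u - v)) \<bullet> (u - v)) * (1 - 0)"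
    using mvt_very_simple[of 0 1 "\<lambda>t. G (v + t *\<^sub>R (u - v))", OF _ seg_deriv[OF X v u der]] by auto
  have "v + t *\<^sub>R (u - v) = (1 - t) *\<^sub>R v + t *\<^sub>R u" by (simp add: algebra_simps)
  then have "v + t *\<^sub>R (u - v) \<in> X" using X v u t by (auto intro: convexD_alt)
  then show ?thesis using e by auto
qed

lemma wc_from_lower:
  fixes G :: "'a::real_inner \<Rightarrow> real" and dG :: "'a \<Rightarrow> 'a"
  assumes X: "convex X"
    and low: "\<And>z u. z \<in> X \<Longrightarrow> u \<in> X \<Longrightarrow> G u \<ge> G z + dG z \<bullet> (u - z) - lam / 2 * (norm (u - z))\<^sup>2"
    and a: "a \<in> X" and b: "b \<in> X" and s: "0 \<le> s" "s \<le> 1"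
  shows "G ((1 - s) *\<^sub>R a + s *\<^sub>R b) \<le> (1 - s) * G a + s * G b + lam / 2 * s * (1 - s) * (norm (a - b))\<^sup>2"
proof -
  define z where "z = (1 - s) *\<^sub>R a + s *\<^sub>R b"
  have z: "z \<in> X" using X a b s unfolding z_def by (auto intro: convexD_alt)
  have az: "a - z = s *\<^sub>R (a - b)" by (simp add: z_def algebra_simps)
  have bz: "b - z = (s - 1) *\<^sub>R (a - b)" by (simp add: z_def algebra_simps)
  define c where "c = dG z \<bullet> (a - b)"
  define N where "N = (norm (a - b))\<^sup>2"
  have la: "G a \<ge> G z + s * c - lam / 2 * (s\<^sup>2 * N)"
    using low[OF z a] unfolding az c_def N_def by (simp add: power_mult_distrib)
  have lb: "G b \<ge> G z + (s - 1) * c - lam / 2 * ((s - 1)\<^sup>2 * N)"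
    using low[OF z b] unfolding bz c_def N_def by (simp add: power_mult_distrib)
  have la': "(1 - s) * G a \<ge> (1 - s) * (G z + s * c - lam / 2 * (s\<^sup>2 * N))"
    using la s by (intro mult_left_mono) auto
  have lb': "s * G b \<ge> s * (G z + (s - 1) * c - lam / 2 * ((s - 1)\<^sup>2 * N))"
    using lb s by (intro mult_left_mono) auto
  have "(1 - s) * (G z + s * c - lam / 2 * (s\<^sup>2 * N)) + s * (G z + (s - 1) * c - lam / 2 * ((s - 1)\<^sup>2 * N))
      = G z - lam / 2 * s * (1 - s) * N"
    by (simp add: field_simps power2_eq_square)
  then show ?thesis using la' lb' unfolding z_def[symmetric] N_def[symmetric] by linarith
qed

lemma env_bound:
  fixes F fh :: "'a::euclidean_space \<Rightarrow> real"
  assumes Xc: "closed X" and Xv: "convex X" and x0: "x0 \<in> X" and lam: "lam > 0"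
    and cont: "continuous_on X F"
    and wc: "\<And>a b s. a \<in> X \<Longrightarrow> b \<in> X \<Longrightarrow> 0 \<le> s \<Longrightarrow> s \<le> 1 \<Longrightarrow>
        F ((1 - s) *\<^sub>R a + s *\<^sub>R b) \<le> (1 - s) * F a + s * F b + lam / 2 * s * (1 - s) * (norm (a - b))\<^sup>2"
    and low: "\<And>u. u \<in> X \<Longrightarrow> F u \<ge> c - K * norm (u - x0) - lam / 2 * (norm (u - x0))\<^sup>2"
    and K: "K \<ge> 0"
    and z: "z \<in> X"
    and hd: "\<And>u. u \<in> X \<Longrightarrow> fh u + lam * (norm (u - z))\<^sup>2 \<ge> fh z - \<delta>"
    and eL: "\<And>u v. u \<in> X \<Longrightarrow> v \<in> X \<Longrightarrow> (F u - fh u) - (F v - fh v) \<le> L * norm (u - v)"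
  shows "\<exists>g. GDERIV (moreau_env F X (2 * lam)) z :> g \<and> (norm g)\<^sup>2 \<le> 8 * lam * \<delta> + 4 * L * norm g"
proof -
  have "\<forall>x. \<exists>q. q \<in> X \<and> (\<forall>u\<in>X. F q + lam * (norm (q - x))\<^sup>2 \<le> F u + lam * (norm (u - x))\<^sup>2)"
    using exists_prox[OF Xc x0 cont low lam K] by blast
  then obtain Q where Q: "\<And>x. Q x \<in> X"
    and Qm: "\<And>x u. u \<in> X \<Longrightarrow> F (Q x) + lam * (norm (Q x - x))\<^sup>2 \<le> F u + lam * (norm (u - x))\<^sup>2"
    by metis
  have gr: "\<And>y u. u \<in> X \<Longrightarrow> F u + lam * (norm (u - y))\<^sup>2 \<ge> F (Q y) + lam * (norm (Q y - y))\<^sup>2 + lam / 2 * (norm (u - Q y))\<^sup>2"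
    by (rule growth[OF Xv wc lam Q Qm]) auto
  have gd: "GDERIV (moreau_env F X (2 * lam)) z :> (2 * lam) *\<^sub>R (z - Q z)"
    by (rule env_gderiv[OF Q Qm gr lam])
  define q where "q = Q z"
  define r where "r = norm (z - q)"
  have g1: "F z \<ge> F q + lam * (norm (q - z))\<^sup>2 + lam / 2 * r\<^sup>2"
    using gr[OF z, of z] by (simp add: q_def r_def)
  have g2: "fh q + lam * (norm (q - z))\<^sup>2 \<ge> fh z - \<delta>" using hd[OF Q[of z]] by (simp add: q_def)
  have g3: "(F z - fh z) - (F q - fh q) \<le> L * r" using eL[OF z Q[of z]] by (simp add: q_def r_def)
  have key: "lam / 2 * r\<^sup>2 \<le> \<delta> + L * r" using g1 g2 g3 by linarith
  have ng: "norm ((2 * lam) *\<^sub>R (z - Q z)) = 2 * lam * r" using lam by (simp add: r_def q_def)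
  have "(2 * lam * r)\<^sup>2 = 8 * lam * (lam / 2 * r\<^sup>2)" by (simp add: power2_eq_square)
  also have "\<dots> \<le> 8 * lam * (\<delta> + L * r)" using key lam by (intro mult_left_mono) auto
  also have "\<dots> = 8 * lam * \<delta> + 4 * L * (2 * lam * r)" by (simp add: algebra_simps)
  finally show ?thesis using gd ng by auto
qed

lemma pgd_identity:
  fixes x g u :: "'a::real_inner"
  assumes lam: "lam > 0"
  shows "2 * lam * (g \<bullet> (u - x)) + lam\<^sup>2 * (norm (u - x))\<^sup>2
       = lam\<^sup>2 * (norm (u - (x - (1 / lam) *\<^sub>R g)))\<^sup>2 - (norm g)\<^sup>2"
proof -
  have e: "lam *\<^sub>R (u - (x - (1 / lam) *\<^sub>R g)) = lam *\<^sub>R (u - x) + g"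
    using lam by (simp add: algebra_simps)
  have n1: "(norm (lam *\<^sub>R (u - (x - (1 / lam) *\<^sub>R g))))\<^sup>2 = lam\<^sup>2 * (norm (u - (x - (1 / lam) *\<^sub>R g)))\<^sup>2"
    by (simp add: power_mult_distrib)
  have n2: "(norm (lam *\<^sub>R (u - x)))\<^sup>2 = lam\<^sup>2 * (norm (u - x))\<^sup>2"
    by (simp add: power_mult_distrib)
  have d: "(lam *\<^sub>R (u - x)) \<bullet> g = ((norm (lam *\<^sub>R (u - x) + g))\<^sup>2 - (norm (lam *\<^sub>R (u - x)))\<^sup>2 - (norm g)\<^sup>2) / 2"
    by (rule dot_norm)
  have i: "(lam *\<^sub>R (u - x)) \<bullet> g = lam * (g \<bullet> (u - x))" by (simp add: inner_commute)
  have d2: "lam * (g \<bullet> (u - x)) = (lam\<^sup>2 * (norm (u - (x - (1 / lam) *\<^sub>R g)))\<^sup>2 - lam\<^sup>2 * (norm (u - x))\<^sup>2 - (norm g)\<^sup>2) / 2"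
    using d unfolding i e[symmetric] n1 n2 .
  then show ?thesis by (simp add: field_simps)
qed

lemma pgd_step:
  fixes fh :: "'a::euclidean_space \<Rightarrow> real"
  assumes lam: "lam > 0" and Xc: "closed X" and x: "x \<in> X"
    and up: "\<And>u. u \<in> X \<Longrightarrow> fh u \<le> fh x + g \<bullet> (u - x) + lam / 2 * (norm (u - x))\<^sup>2"
    and lo: "\<And>u. u \<in> X \<Longrightarrow> fh u \<ge> fh x + g \<bullet> (u - x) - lam / 2 * (norm (u - x))\<^sup>2"
    and x': "x' = closest_point X (x - (1 / lam) *\<^sub>R g)"
    and es: "es = (norm g)\<^sup>2 - lam\<^sup>2 * (norm ((x - (1 / lam) *\<^sub>R g) - x'))\<^sup>2"
  shows "es \<ge> 0" and "fh x' \<le> fh x - es / (2 * lam)"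
    and "\<And>u. u \<in> X \<Longrightarrow> fh u + lam * (norm (u - x))\<^sup>2 \<ge> fh x - es / (2 * lam)"
proof -
  define xt where "xt = x - (1 / lam) *\<^sub>R g"
  have Xne: "X \<noteq> {}" using x by auto
  have x'X: "x' \<in> X" unfolding x' by (rule closest_point_in_set[OF Xc Xne])
  have cl: "norm (xt - x') \<le> norm (xt - u)" if "u \<in> X" for u
    using closest_point_le[OF Xc that, of xt] unfolding x' xt_def by (simp add: dist_norm)
  have cl2: "lam\<^sup>2 * (norm (xt - x'))\<^sup>2 \<le> lam\<^sup>2 * (norm (u - xt))\<^sup>2" if "u \<in> X" for u
  proof -
    have "(norm (xt - x'))\<^sup>2 \<le> (norm (u - xt))\<^sup>2"
      using cl[OF that] by (simp add: norm_minus_commute power_mono)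
    then show ?thesis by (simp add: mult_left_mono)
  qed
  have idx: "2 * lam * (g \<bullet> (u - x)) + lam\<^sup>2 * (norm (u - x))\<^sup>2 = lam\<^sup>2 * (norm (u - xt))\<^sup>2 - (norm g)\<^sup>2" for u
    unfolding xt_def by (rule pgd_identity[OF lam])
  have es': "es = (norm g)\<^sup>2 - lam\<^sup>2 * (norm (xt - x'))\<^sup>2" using es by (simp add: xt_def)
  have "lam\<^sup>2 * (norm (x - xt))\<^sup>2 = (norm g)\<^sup>2" using idx[of x] by simp
  then show "es \<ge> 0" using cl2[OF x] es' by simp
  have "g \<bullet> (x' - x) + lam / 2 * (norm (x' - x))\<^sup>2 = (2 * lam * (g \<bullet> (x' - x)) + lam\<^sup>2 * (norm (x' - x))\<^sup>2) / (2 * lam)"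
    using lam by (simp add: field_simps power2_eq_square)
  also have "\<dots> = (lam\<^sup>2 * (norm (x' - xt))\<^sup>2 - (norm g)\<^sup>2) / (2 * lam)" unfolding idx ..
  also have "\<dots> = - es / (2 * lam)" using es' by (simp add: norm_minus_commute)
  finally show "fh x' \<le> fh x - es / (2 * lam)" using up[OF x'X] by linarith
  fix u assume u: "u \<in> X"
  have "- es / (2 * lam) = (lam\<^sup>2 * (norm (xt - x'))\<^sup>2 - (norm g)\<^sup>2) / (2 * lam)" using es' by simp
  also have "\<dots> \<le> (lam\<^sup>2 * (norm (u - xt))\<^sup>2 - (norm g)\<^sup>2) / (2 * lam)"
    using cl2[OF u] lam by (intro divide_right_mono) auto
  also have "\<dots> = (2 * lam * (g \<bullet> (u - x)) + lam\<^sup>2 * (norm (u - x))\<^sup>2) / (2 * lam)" unfolding idx ..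
  also have "\<dots> = g \<bullet> (u - x) + lam / 2 * (norm (u - x))\<^sup>2"
    using lam by (simp add: field_simps power2_eq_square)
  finally have "- es / (2 * lam) \<le> g \<bullet> (u - x) + lam / 2 * (norm (u - x))\<^sup>2" .
  then show "fh u + lam * (norm (u - x))\<^sup>2 \<ge> fh x - es / (2 * lam)" using lo[OF u] by linarith
qed

lemma state_inv:
  assumes "n > 0"
  shows "\<exists>t<n. alg1_state gx X gam x0 yh n = (alg1_x gx X gam x0 yh t, ereal (sqrt (alg1_eps_sq gx X gam x0 yh t)))
     \<and> (\<forall>s<n. sqrt (alg1_eps_sq gx X gam x0 yh t) \<le> sqrt (alg1_eps_sq gx X gam x0 yh s))"
  using assms
proof (induction n)
  case 0 then show ?case by simp
next
  case (Suc n)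
  let ?e = "\<lambda>t. sqrt (alg1_eps_sq gx X gam x0 yh t)"
  show ?case
  proof (cases "n = 0")
    case True
    then show ?thesis by auto
  next
    case False
    then obtain t where t: "t < n" and st: "alg1_state gx X gam x0 yh n = (alg1_x gx X gam x0 yh t, ereal (?e t))"
      and mn: "\<forall>s<n. ?e t \<le> ?e s" using Suc by auto
    show ?thesis
    proof (cases "?e n < ?e t")
      case True
      then have "alg1_state gx X gam x0 yh (Suc n) = (alg1_x gx X gam x0 yh n, ereal (?e n))"
        using st by simp
      moreover have "\<forall>s<Suc n. ?e n \<le> ?e s" using mn True by (auto simp: less_Suc_eq)
      ultimately show ?thesis by blast
    next
      case False
      then have "alg1_state gx X gam x0 yh (Suc n) = (alg1_x gx X gam x0 yh t, ereal (?e t))"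
        using st by simp
      moreover have "\<forall>s<Suc n. ?e t \<le> ?e s" using mn False by (auto simp: less_Suc_eq)
      ultimately show ?thesis using t by (meson less_SucI)
    qed
  qed
qed

theorem theorem2:
  fixes f :: "'a::euclidean_space \<Rightarrow> 'b::euclidean_space \<Rightarrow> real"
    and gx :: "'a \<Rightarrow> 'b \<Rightarrow> 'a"
    and X :: "'a set" and Y :: "'b set"
    and lam mu D eps :: real and x0 :: 'a and yh :: 'b and T :: nat
  assumes X: "convex X" "closed X" "interior X \<noteq> {}"
    and Y: "convex Y" "compact Y" "interior Y \<noteq> {}"
    and D: "diameter Y \<le> D"
    and grad: "\<And>x y. x \<in> X \<Longrightarrow> y \<in> Y \<Longrightarrow>
                 ((\<lambda>u. f u y) has_derivative (\<lambda>h. gx x y \<bullet> h)) (at x within X)"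
    and lip: "\<And>x x' y y'. x \<in> X \<Longrightarrow> x' \<in> X \<Longrightarrow> y \<in> Y \<Longrightarrow> y' \<in> Y \<Longrightarrow>
                 norm (gx x' y' - gx x y) \<le> lam * norm (x' - x) + mu * norm (y' - y)"
    and lam: "lam > 0" and mu: "mu \<ge> 0"
    and max_ex: "\<And>x. x \<in> X \<Longrightarrow> \<exists>y\<in>Y. \<forall>y'\<in>Y. f x y' \<le> f x y"
    and min_ex: "\<exists>x\<in>X. \<forall>x'\<in>X. f x yh \<le> f x' yh"
    and x0: "x0 \<in> X" and yh: "yh \<in> Y"
    and eps: "eps > 0"
    and T: "real T \<ge> 300 * lam * ((SUP y\<in>Y. f x0 y) - (INF x\<in>X. f x yh)) / eps\<^sup>2"
  shows "(\<exists>g. GDERIV (moreau_env (\<lambda>x. f x yh) X (2 * lam)) (alg1_output gx X (1 / lam) x0 yh T) :> g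
              \<and> norm g \<le> eps / 6)
       \<and> (24 * mu * D \<le> eps \<longrightarrow>
           (\<exists>g. GDERIV (moreau_env (\<lambda>x. SUP y\<in>Y. f x y) X (2 * lam)) (alg1_output gx X (1 / lam) x0 yh T) :> g
              \<and> norm g \<le> eps))"
proof -
  have Xne: "X \<noteq> {}" using x0 by auto
  have bY: "bounded Y" using Y(2) by (rule compact_imp_bounded)
  have dist_le: "norm (y - yh) \<le> D" if "y \<in> Y" for y
    using diameter_bounded_bound[OF bY that yh] D by (simp add: dist_norm)
  have D0: "D \<ge> 0" using dist_le[OF yh] by simp
  have lipY: "norm (gx b y - gx a y) \<le> lam * norm (b - a)" if "y \<in> Y" "a \<in> X" "b \<in> X" for y a b
    using lip[of a b y y] that by simp
  have upY: "f u y \<le> f z y + gx z y \<bullet> (u - z) + lam / 2 * (norm (u - z))\<^sup>2"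
    if y: "y \<in> Y" and z: "z \<in> X" and u: "u \<in> X" for y z u
    by (rule quad_bound(1)[where G="\<lambda>u. f u y" and dG="\<lambda>z. gx z y", OF X(1) z u])
       (auto intro: grad[OF _ y] lipY[OF y])
  have lowY: "f u y \<ge> f z y + gx z y \<bullet> (u - z) - lam / 2 * (norm (u - z))\<^sup>2"
    if y: "y \<in> Y" and z: "z \<in> X" and u: "u \<in> X" for y z u
    by (rule quad_bound(2)[where G="\<lambda>u. f u y" and dG="\<lambda>z. gx z y", OF X(1) z u])
       (auto intro: grad[OF _ y] lipY[OF y])
  have wcY: "f ((1 - s) *\<^sub>R a + s *\<^sub>R b) y \<le> (1 - s) * f a y + s * f b y + lam / 2 * s * (1 - s) * (norm (a - b))\<^sup>2"
    if y: "y \<in> Y" and a: "a \<in> X" and b: "b \<in> X" and s: "0 \<le> s" "s \<le> 1" for y a b s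
    by (rule wc_from_lower[where G="\<lambda>u. f u y" and dG="\<lambda>z. gx z y", OF X(1) _ a b s])
       (rule lowY[OF y], auto)
  define xs where "xs = alg1_x gx X (1 / lam) x0 yh"
  define es where "es = alg1_eps_sq gx X (1 / lam) x0 yh"
  have xs0: "xs 0 = x0" by (simp add: xs_def)
  have xsS: "xs (Suc t) = closest_point X (xs t - (1 / lam) *\<^sub>R gx (xs t) yh)" for t
    by (simp add: xs_def)
  have xsX: "xs t \<in> X" for t
  proof (induction t)
    case 0 then show ?case using xs0 x0 by simp
  next
    case (Suc t) show ?case unfolding xsS by (rule closest_point_in_set[OF X(2) Xne])
  qed
  have es_eq: "es t = (norm (gx (xs t) yh))\<^sup>2 - lam\<^sup>2 * (norm ((xs t - (1 / lam) *\<^sub>R gx (xs t) yh) - xs (Suc t)))\<^sup>2" for t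
    by (simp add: es_def alg1_eps_sq_def alg1_xt_def xs_def power_one_over)
  have step: "es t \<ge> 0" "f (xs (Suc t)) yh \<le> f (xs t) yh - es t / (2 * lam)"
    "\<And>u. u \<in> X \<Longrightarrow> f u yh + lam * (norm (u - xs t))\<^sup>2 \<ge> f (xs t) yh - es t / (2 * lam)" for t
    using pgd_step[where fh="\<lambda>u. f u yh", OF lam X(2) xsX[of t] upY[OF yh xsX[of t]] lowY[OF yh xsX[of t]] xsS[of t] es_eq[of t]]
    by auto
  have step2: "es t \<le> 2 * lam * (f (xs t) yh - f (xs (Suc t)) yh)" for t
  proof -
    have "es t / (2 * lam) \<le> f (xs t) yh - f (xs (Suc t)) yh" using step(2)[of t] by linarith
    then show ?thesis using lam by (simp add: pos_divide_le_eq mult.commute)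
  qed
  have tele: "(\<Sum>s<n. es s) \<le> 2 * lam * (f x0 yh - f (xs n) yh)" for n
  proof (induction n)
    case 0 then show ?case by (simp add: xs0)
  next
    case (Suc n)
    then show ?case using step2[of n] by (simp add: algebra_simps)
  qed
  have "\<forall>x\<in>X. \<exists>y\<in>Y. \<forall>y'\<in>Y. f x y' \<le> f x y" using max_ex by blast
  then obtain ym where ymY: "\<And>x. x \<in> X \<Longrightarrow> ym x \<in> Y"
    and ymM: "\<And>x y'. x \<in> X \<Longrightarrow> y' \<in> Y \<Longrightarrow> f x y' \<le> f x (ym x)" by metis
  define phi where "phi = (\<lambda>x. SUP y\<in>Y. f x y)"
  have phi_eq: "phi x = f x (ym x)" if "x \<in> X" for x
    unfolding phi_def by (rule cSup_eq_maximum) (use ymY[OF that] ymM[OF that] in auto)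
  have phi_ge: "f x y \<le> phi x" if "x \<in> X" "y \<in> Y" for x y
    using phi_eq[OF that(1)] ymM[OF that] by simp
  obtain xm where xm: "xm \<in> X" and xmM: "\<And>x'. x' \<in> X \<Longrightarrow> f xm yh \<le> f x' yh" using min_ex by blast
  have psi_eq: "(INF x\<in>X. f x yh) = f xm yh"
    by (rule cInf_eq_minimum) (use xm xmM in auto)
  define Dl where "Dl = phi x0 - f xm yh"
  have TD: "300 * lam * Dl \<le> real T * eps\<^sup>2"
  proof -
    have "300 * lam * Dl / eps\<^sup>2 \<le> real T" using T unfolding Dl_def phi_def psi_eq .
    then show ?thesis using eps by (simp add: pos_divide_le_eq)
  qed
  define out where "out = alg1_output gx X (1 / lam) x0 yh T"
  have main: "out \<in> X \<and> (\<exists>\<delta>. 0 \<le> \<delta> \<and> 8 * lam * \<delta> \<le> 4 * eps\<^sup>2 / 150 \<and>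
      (\<forall>u\<in>X. f u yh + lam * (norm (u - out))\<^sup>2 \<ge> f out yh - \<delta>))"
  proof (cases "T = 0")
    case True
    then have o: "out = x0" by (simp add: out_def alg1_output_def)
    have "Dl \<le> 0" using TD True lam by (simp add: mult_le_0_iff)
    then have "f x0 yh \<le> f u yh" if "u \<in> X" for u
      using phi_ge[OF x0 yh] xmM[OF that] unfolding Dl_def by linarith
    then have "\<forall>u\<in>X. f u yh + lam * (norm (u - out))\<^sup>2 \<ge> f out yh - 0"
      unfolding o using lam by (smt (verit) mult_nonneg_nonneg zero_le_power2)
    then show ?thesis using o x0 eps by auto
  next
    case False
    then have Tp: "T > 0" by simp
    obtain t where t: "t < T"
      and st: "alg1_state gx X (1 / lam) x0 yh T = (alg1_x gx X (1 / lam) x0 yh t, ereal (sqrt (alg1_eps_sq gx X (1 / lam) x0 yh t)))"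
      and mn: "\<forall>s<T. sqrt (alg1_eps_sq gx X (1 / lam) x0 yh t) \<le> sqrt (alg1_eps_sq gx X (1 / lam) x0 yh s)"
      using state_inv[OF Tp, of gx X "1 / lam" x0 yh] by blast
    have o: "out = xs t" using st by (simp add: out_def alg1_output_def xs_def)
    have mn': "es t \<le> es s" if "s < T" for s
      using mn that step(1)[of t] step(1)[of s] by (simp add: es_def)
    have "real T * es t = (\<Sum>s<T. es t)" by simp
    also have "\<dots> \<le> (\<Sum>s<T. es s)" by (rule sum_mono) (use mn' in auto)
    also have "\<dots> \<le> 2 * lam * (f x0 yh - f (xs T) yh)" by (rule tele)
    also have "\<dots> \<le> 2 * lam * Dl"
    proof -
      have "f x0 yh - f (xs T) yh \<le> Dl" using phi_ge[OF x0 yh] xmM[OF xsX[of T]] unfolding Dl_def by linarith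
      then show ?thesis using lam by simp
    qed
    finally have "real T * es t \<le> 2 * lam * Dl" .
    then have "150 * (real T * es t) \<le> real T * eps\<^sup>2" using TD by linarith
    then have "real T * (150 * es t) \<le> real T * eps\<^sup>2" by (simp add: algebra_simps)
    then have et: "150 * es t \<le> eps\<^sup>2" using Tp by simp
    define \<delta> where "\<delta> = es t / (2 * lam)"
    have "8 * lam * \<delta> = 4 * es t" using lam by (simp add: \<delta>_def)
    then have "8 * lam * \<delta> \<le> 4 * eps\<^sup>2 / 150" using et by simp
    moreover have "0 \<le> \<delta>" using step(1)[of t] lam by (simp add: \<delta>_def)
    moreover have "\<forall>u\<in>X. f u yh + lam * (norm (u - out))\<^sup>2 \<ge> f out yh - \<delta>"
      using step(3)[of _ t] unfolding o \<delta>_def by blast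
    ultimately show ?thesis using o xsX by blast
  qed
  then obtain \<delta> where outX: "out \<in> X" and d0: "0 \<le> \<delta>" and d8: "8 * lam * \<delta> \<le> 4 * eps\<^sup>2 / 150"
    and hd: "\<And>u. u \<in> X \<Longrightarrow> f u yh + lam * (norm (u - out))\<^sup>2 \<ge> f out yh - \<delta>" by blast
  define K where "K = norm (gx x0 yh)"
  have K0: "K \<ge> 0" by (simp add: K_def)
  have lowfh: "f u yh \<ge> f x0 yh - K * norm (u - x0) - lam / 2 * (norm (u - x0))\<^sup>2" if "u \<in> X" for u
  proof -
    have "\<bar>gx x0 yh \<bullet> (u - x0)\<bar> \<le> K * norm (u - x0)" unfolding K_def by (rule Cauchy_Schwarz_ineq2)
    then show ?thesis using lowY[OF yh x0 that] by linarith
  qed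
  have contfh: "continuous_on X (\<lambda>u. f u yh)"
    unfolding continuous_on_eq_continuous_within
    using grad[OF _ yh] has_derivative_continuous by blast
  have part1: "\<exists>g. GDERIV (moreau_env (\<lambda>x. f x yh) X (2 * lam)) out :> g \<and> norm g \<le> eps / 6"
  proof -
    obtain g where g: "GDERIV (moreau_env (\<lambda>x. f x yh) X (2 * lam)) out :> g"
      and gb: "(norm g)\<^sup>2 \<le> 8 * lam * \<delta> + 4 * 0 * norm g"
      using env_bound[where F="\<lambda>x. f x yh" and fh="\<lambda>x. f x yh" and L=0, OF X(2) X(1) x0 lam contfh
          wcY[OF yh] lowfh K0 outX hd] by auto
    have "norm g \<le> eps / 6"
    proof (rule ccontr)
      assume "\<not> ?thesis"
      then have "eps / 6 < norm g" by simp
      then have "(eps / 6)\<^sup>2 < (norm g)\<^sup>2" using eps by (intro power_strict_mono) auto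
      then have c: "eps\<^sup>2 < 36 * (norm g)\<^sup>2" by (simp add: power_divide)
      have a: "(norm g)\<^sup>2 \<le> 8 * (lam * \<delta>)" using gb by (simp add: mult.assoc)
      have b: "8 * (lam * \<delta>) \<le> 4 * eps\<^sup>2 / 150" using d8 by (simp add: mult.assoc)
      have "eps\<^sup>2 > 0" using eps by simp
      then show False using a b c by linarith
    qed
    then show ?thesis using g by blast
  qed
  have eL: "(phi u - f u yh) - (phi v - f v yh) \<le> mu * D * norm (u - v)" if u: "u \<in> X" and v: "v \<in> X" for u v
  proof -
    define yu where "yu = ym u"
    have yu: "yu \<in> Y" using ymY[OF u] by (simp add: yu_def)
    have der: "((\<lambda>w. f w yu - f w yh) has_derivative (\<lambda>h. (gx z yu - gx z yh) \<bullet> h)) (at z within X)"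
      if "z \<in> X" for z
      using has_derivative_diff[OF grad[OF that yu] grad[OF that yh]] by (simp add: inner_diff_left)
    obtain z where z: "z \<in> X" and ez: "(f u yu - f u yh) - (f v yu - f v yh) = (gx z yu - gx z yh) \<bullet> (u - v)"
      using mvt_seg[where G="\<lambda>w. f w yu - f w yh" and dG="\<lambda>z. gx z yu - gx z yh", OF X(1) v u der] by blast
    have "(gx z yu - gx z yh) \<bullet> (u - v) \<le> norm (gx z yu - gx z yh) * norm (u - v)"
      by (rule norm_cauchy_schwarz)
    also have "\<dots> \<le> (mu * D) * norm (u - v)"
    proof (rule mult_right_mono)
      have "norm (gx z yu - gx z yh) \<le> lam * norm (z - z) + mu * norm (yu - yh)"
        by (rule lip[OF z z yh yu])
      also have "\<dots> \<le> mu * D" using dist_le[OF yu] mu by (simp add: mult_left_mono)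
      finally show "norm (gx z yu - gx z yh) \<le> mu * D" .
    qed simp
    finally have "(f u yu - f u yh) - (f v yu - f v yh) \<le> mu * D * norm (u - v)" using ez by simp
    moreover have "phi u = f u yu" using phi_eq[OF u] by (simp add: yu_def)
    moreover have "f v yu \<le> phi v" by (rule phi_ge[OF v yu])
    ultimately show ?thesis by linarith
  qed
  have part2: "24 * mu * D \<le> eps \<longrightarrow>
     (\<exists>g. GDERIV (moreau_env (\<lambda>x. SUP y\<in>Y. f x y) X (2 * lam)) out :> g \<and> norm g \<le> eps)"
  proof
    assume muD: "24 * mu * D \<le> eps"
    have L0: "mu * D \<ge> 0" using mu D0 by simp
    have lipe: "lipschitz_on (mu * D) X (\<lambda>u. phi u - f u yh)"
      unfolding lipschitz_on_def
    proof (intro conjI ballI)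
      show "0 \<le> mu * D" by (rule L0)
      fix u v assume u: "u \<in> X" and v: "v \<in> X"
      have "(phi u - f u yh) - (phi v - f v yh) \<le> mu * D * norm (u - v)" by (rule eL[OF u v])
      moreover have "(phi v - f v yh) - (phi u - f u yh) \<le> mu * D * norm (v - u)" by (rule eL[OF v u])
      ultimately show "dist (phi u - f u yh) (phi v - f v yh) \<le> mu * D * dist u v"
        by (simp add: dist_norm dist_real_def norm_minus_commute abs_le_iff)
    qed
    have contphi: "continuous_on X phi"
    proof -
      have "continuous_on X (\<lambda>u. f u yh + (phi u - f u yh))"
        by (intro continuous_on_add contfh lipschitz_on_continuous_on[OF lipe])
      then show ?thesis by simp
    qed
    have wcphi: "phi ((1 - s) *\<^sub>R a + s *\<^sub>R b) \<le> (1 - s) * phi a + s * phi b + lam / 2 * s * (1 - s) * (norm (a - b))\<^sup>2"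
      if a: "a \<in> X" and b: "b \<in> X" and s: "0 \<le> s" "s \<le> 1" for a b s
    proof -
      define z where "z = (1 - s) *\<^sub>R a + s *\<^sub>R b"
      have z: "z \<in> X" using X(1) a b s unfolding z_def by (auto intro: convexD_alt)
      have "phi z = f z (ym z)" by (rule phi_eq[OF z])
      also have "\<dots> \<le> (1 - s) * f a (ym z) + s * f b (ym z) + lam / 2 * s * (1 - s) * (norm (a - b))\<^sup>2"
        by (rule wcY[OF ymY[OF z] a b s, folded z_def])
      also have "\<dots> \<le> (1 - s) * phi a + s * phi b + lam / 2 * s * (1 - s) * (norm (a - b))\<^sup>2"
      proof -
        have "(1 - s) * f a (ym z) \<le> (1 - s) * phi a"
          using phi_ge[OF a ymY[OF z]] s by (intro mult_left_mono) auto
        moreover have "s * f b (ym z) \<le> s * phi b"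
          using phi_ge[OF b ymY[OF z]] s by (intro mult_left_mono) auto
        ultimately show ?thesis by linarith
      qed
      finally show ?thesis unfolding z_def .
    qed
    have lowphi: "phi u \<ge> f x0 yh - K * norm (u - x0) - lam / 2 * (norm (u - x0))\<^sup>2" if "u \<in> X" for u
      using lowfh[OF that] phi_ge[OF that yh] by linarith
    obtain g where g: "GDERIV (moreau_env phi X (2 * lam)) out :> g"
      and gb: "(norm g)\<^sup>2 \<le> 8 * lam * \<delta> + 4 * (mu * D) * norm g"
      using env_bound[where F="phi" and fh="\<lambda>x. f x yh" and L="mu * D", OF X(2) X(1) x0 lam contphi
          wcphi lowphi K0 outX hd eL] by auto
    have "norm g \<le> eps"
    proof (rule ccontr)
      assume "\<not> ?thesis"
      then have ge: "eps < norm g" by simp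
      define n where "n = norm g"
      define m where "m = mu * D"
      have n0: "n > 0" using ge eps unfolding n_def by linarith
      have B: "m * n \<le> (eps / 24) * n" using muD n0 by (intro mult_right_mono) (auto simp: m_def)
      have A: "eps * n < n * n" using ge n0 by (simp add: n_def)
      have C: "eps * eps \<le> eps * n" using ge eps by (intro mult_left_mono) (auto simp: n_def)
      have B': "(eps / 24) * n = (eps * n) / 24" by simp
      have "n * n > 4 * (eps * eps) / 150 + 4 * m * n"
        using A B B' C mult_pos_pos[OF eps n0] by linarith
      then have "(norm g)\<^sup>2 > 4 * eps\<^sup>2 / 150 + 4 * (mu * D) * norm g"
        by (simp add: power2_eq_square n_def m_def)
      then show False using gb d8 by linarith
    qed
    then show "\<exists>g. GDERIV (moreau_env (\<lambda>x. SUP y\<in>Y. f x y) X (2 * lam)) out :> g \<and> norm g \<le> eps"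
      using g unfolding phi_def by blast
  qed
  show ?thesis using part1 part2 unfolding out_def by blast
qed

end
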